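(* Let $d\ge 2$, let $K$ be a hemisphere of $S^d$ and let $p\in \mathrm{bd}(K)$. Let $pq\subset K$ be an arc orthogonal to $\mathrm{bd}(K)$ at $p$, with $q$ in the interior of $K$ and $|pq|<\frac{\pi}{2}$. Consider all lunes of the form $K\cap M$, where $M$ is a hemisphere with $q\in\mathrm{bd}(M)$ and $p\in M$ (so that $pq\subset K\cap M$). Let $K_\perp$ be the hemisphere with $q\in \mathrm{bd}(K_\perp)$ and $p\in K_\perp$ such that $pq$ is orthogonal to $\mathrm{bd}(K_\perp)$ at $q$. Then among all these lunes, $K\cap K_\perp$ has the smallest thickness.
   Context: $S^d$ is the unit sphere in $E^{d+1}$. For non-antipodal points $a,b$, the arc $ab$ is the shorter great-circle arc joining them and $|ab|$ is its length (the spherical distance). A hemisphere is the intersection of $S^d$ with a closed half-space of $E^{d+1}$ whose boundary hyperplane passes through the origin; its center is the point of the hemisphere at distance $\frac{\pi}{2}$ from its boundary. If hemispheres $G,H$ are different and not opposite (opposite means their centers are antipodal), $L=G\cap H$ is a lune; $G/H$ and $H/G$ denote the parts of $\mathrm{bd}(G)$ and $\mathrm{bd}(H)$ contained in $G\cap H$ (these are $(d-1)$-dimensional hemispheres, i.e., sets of points of a $(d-1)$-dimensional great sphere at distance at most $\frac{\pi}{2}$ from a point, called the center). The thickness $\Delta(L)$ of the lune is the spherical distance between the centers of $G/H$ and $H/G$. *)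

theory Defs
  imports "HOL-Analysis.Analysis"
begin

text \<open>The unit sphere S^d is the unit sphere of a Euclidean space of dimension d+1.\<close>
definition usphere :: "'a::euclidean_space set" where
  "usphere = {x. norm x = 1}"

definition sdist :: "'a::euclidean_space \<Rightarrow> 'a \<Rightarrow> real" where
  "sdist a b = arccos (a \<bullet> b)"

definition sdist_set :: "'a::euclidean_space \<Rightarrow> 'a set \<Rightarrow> real" where
  "sdist_set a S = (INF x\<in>S. sdist a x)"

text \<open>The arc ab (for non-antipodal a, b): points of the sphere on the shorter
  great-circle arc joining them.\<close>
definition sarc :: "'a::euclidean_space \<Rightarrow> 'a \<Rightarrow> 'a set" where
  "sarc a b = {x \<in> usphere. \<exists>s t. s \<ge> 0 \<and> t \<ge> 0 \<and> x = s *\<^sub>R a + t *\<^sub>R b}"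

definition hemi :: "'a::euclidean_space \<Rightarrow> 'a set" where
  "hemi c = {x \<in> usphere. x \<bullet> c \<ge> 0}"

definition hemi_bd :: "'a::euclidean_space \<Rightarrow> 'a set" where
  "hemi_bd c = {x \<in> usphere. x \<bullet> c = 0}"

definition hemi_int :: "'a::euclidean_space \<Rightarrow> 'a set" where
  "hemi_int c = {x \<in> usphere. x \<bullet> c > 0}"

text \<open>G/H for hemispheres G, H with centers g, h: the part of bd(G) contained in G \<inter> H.\<close>
definition lune_face :: "'a::euclidean_space \<Rightarrow> 'a \<Rightarrow> 'a set" where
  "lune_face g h = hemi_bd g \<inter> hemi h"

definition lune_face_center :: "'a::euclidean_space \<Rightarrow> 'a \<Rightarrow> 'a" where
  "lune_face_center g h =
     (THE c. c \<in> lune_face g h \<and> sdist_set c (hemi_bd g \<inter> hemi_bd h) = pi / 2)"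

definition lune_thickness :: "'a::euclidean_space \<Rightarrow> 'a \<Rightarrow> real" where
  "lune_thickness g h = sdist (lune_face_center g h) (lune_face_center h g)"

text \<open>The arc ab is orthogonal at a to the great sphere bd(H) (H with center c):
  a lies on bd(H) and the tangent vector of the arc at a is orthogonal to every
  tangent vector of bd(H) at a.\<close>
definition arc_orth_at :: "'a::euclidean_space \<Rightarrow> 'a \<Rightarrow> 'a \<Rightarrow> bool" where
  "arc_orth_at a b c \<longleftrightarrow> a \<in> hemi_bd c \<and>
     (\<forall>v. v \<bullet> a = 0 \<and> v \<bullet> c = 0 \<longrightarrow> (b - (a \<bullet> b) *\<^sub>R a) \<bullet> v = 0)"

end

theory Submission
  imports Defs
begin

lemma bd_nonempty:
  fixes g h :: "'a::euclidean_space"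
  assumes dim: "DIM('a) \<ge> 3"
  shows "\<exists>x. x \<in> hemi_bd g \<inter> hemi_bd h"
proof -
  have "dim {g,h} \<le> card {g,h}" by (rule dim_le_card) (auto intro: span_base)
  also have "\<dots> \<le> 2" by (simp add: card_insert_le_m1)
  finally have "dim {g,h} < DIM('a)" using dim by linarith
  then obtain x where x: "x \<noteq> 0" "\<And>y. y \<in> span {g,h} \<Longrightarrow> orthogonal x y"
    using orthogonal_to_subspace_exists by blast
  have "orthogonal x g" "orthogonal x h" using x(2) by (auto intro: span_base)
  then have "x /\<^sub>R norm x \<in> hemi_bd g \<inter> hemi_bd h"
    using x(1) by (auto simp: hemi_bd_def usphere_def orthogonal_def)
  then show ?thesis by blast
qed

lemma inner_le1:
  fixes c x :: "'a::euclidean_space"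
  assumes "norm c = 1" "norm x = 1"
  shows "-1 \<le> c \<bullet> x \<and> c \<bullet> x \<le> 1"
  using Cauchy_Schwarz_ineq2[of c x] assms by auto

lemma center:
  fixes g h :: "'a::euclidean_space"
  assumes dim: "DIM('a) \<ge> 3" and g: "norm g = 1" and h: "norm h = 1"
    and ne1: "h \<noteq> g" and ne2: "h \<noteq> -g"
  shows "lune_face_center g h = (h - (g\<bullet>h) *\<^sub>R g) /\<^sub>R norm (h - (g\<bullet>h) *\<^sub>R g)"
proof -
  define a where "a = g \<bullet> h"
  define w where "w = h - a *\<^sub>R g"
  define n where "n = norm w"
  define u where "u = w /\<^sub>R n"
  define S where "S = hemi_bd g \<inter> hemi_bd h"
  have gg: "g \<bullet> g = 1" using g norm_eq_1 by blast
  have hh: "h \<bullet> h = 1" using h norm_eq_1 by blast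
  have wg: "w \<bullet> g = 0" by (simp add: w_def a_def inner_diff_left gg inner_commute[of h g])
  have ww: "w \<bullet> w = 1 - a^2"
    by (simp add: w_def inner_diff_left inner_diff_right hh gg a_def inner_commute power2_eq_square)
  have wne: "w \<noteq> 0"
  proof
    assume "w = 0"
    then have hw: "h = a *\<^sub>R g" by (simp add: w_def)
    then have "a^2 = 1" using ww \<open>w = 0\<close> by simp
    then have "a = 1 \<or> a = -1" by (simp add: power2_eq_1_iff)
    then show False using hw ne1 ne2 by auto
  qed
  have npos: "n > 0" using wne by (simp add: n_def)
  have nn: "n^2 = 1 - a^2" using ww by (simp add: n_def power2_norm_eq_inner)
  have ug: "u \<bullet> g = 0" by (simp add: u_def wg)
  have un: "norm u = 1" using npos by (simp add: u_def n_def)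
  have wh: "w \<bullet> h = 1 - a^2"
    by (simp add: w_def inner_diff_left hh a_def power2_eq_square)
  have uh: "u \<bullet> h = n"
  proof -
    have "u \<bullet> h = (1 - a^2) / n" using wh by (simp add: u_def divide_inverse mult.commute)
    also have "\<dots> = n" using nn npos by (simp add: power2_eq_square field_simps flip: nn)
    finally show ?thesis .
  qed
  have hdec: "h = a *\<^sub>R g + n *\<^sub>R u" using npos by (simp add: u_def w_def)
  have Sne: "S \<noteq> {}" using bd_nonempty[OF dim] by (auto simp: S_def)
  have uS: "\<And>x. x \<in> S \<Longrightarrow> u \<bullet> x = 0"
    by (simp add: S_def hemi_bd_def u_def w_def inner_diff_left inner_commute[of h] inner_commute[of g])
  have P: "u \<in> lune_face g h \<and> sdist_set u (hemi_bd g \<inter> hemi_bd h) = pi / 2"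
  proof
    show "u \<in> lune_face g h" using un ug uh npos
      by (simp add: lune_face_def hemi_bd_def hemi_def usphere_def inner_commute)
    have "sdist_set u (hemi_bd g \<inter> hemi_bd h) = (INF x\<in>S. pi/2)"
      unfolding sdist_set_def S_def[symmetric] sdist_def
      by (rule INF_cong) (auto simp: uS)
    then show "sdist_set u (hemi_bd g \<inter> hemi_bd h) = pi / 2" using Sne by simp
  qed
  have U: "c = u" if Pc: "c \<in> lune_face g h \<and> sdist_set c (hemi_bd g \<inter> hemi_bd h) = pi / 2" for c
  proof -
    have cn: "norm c = 1" and cg: "c \<bullet> g = 0" and ch: "c \<bullet> h \<ge> 0"
      using Pc by (auto simp: lune_face_def hemi_bd_def hemi_def usphere_def inner_commute)
    have Sn: "\<And>x. x \<in> S \<Longrightarrow> norm x = 1" by (auto simp: S_def hemi_bd_def usphere_def)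
    have bdd: "bdd_below ((\<lambda>x. sdist c x) ` S)"
      by (rule bdd_belowI2[where m=0]) (use inner_le1[OF cn] Sn arccos_lbound in \<open>auto simp: sdist_def\<close>)
    have le0: "c \<bullet> x \<le> 0" if xS: "x \<in> S" for x
    proof -
      have "pi/2 \<le> arccos (c \<bullet> x)"
        using cINF_lower[OF bdd xS] Pc by (simp add: sdist_set_def S_def sdist_def)
      then have "cos (arccos (c \<bullet> x)) \<le> cos (pi/2)"
        using inner_le1[OF cn Sn[OF xS]] arccos_ubound
        by (intro cos_monotone_0_pi_le) auto
      then show ?thesis using inner_le1[OF cn Sn[OF xS]] by simp
    qed
    have c0: "c \<bullet> x = 0" if xS: "x \<in> S" for x
    proof -
      have "-x \<in> S" using xS by (auto simp: S_def hemi_bd_def usphere_def)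
      then show ?thesis using le0[OF xS] le0[of "-x"] by simp
    qed
    define r where "r = c - (c \<bullet> u) *\<^sub>R u"
    have uu: "u \<bullet> u = 1" using un norm_eq_1 by blast
    have rg: "r \<bullet> g = 0" by (simp add: r_def inner_diff_left cg ug)
    have ru: "r \<bullet> u = 0" by (simp add: r_def inner_diff_left uu)
    have rh: "r \<bullet> h = 0" by (subst hdec) (simp add: inner_add_right rg ru)
    have r0: "r = 0"
    proof (rule ccontr)
      assume "r \<noteq> 0"
      then have "r /\<^sub>R norm r \<in> S" using rg rh by (simp add: S_def hemi_bd_def usphere_def)
      then have "c \<bullet> (r /\<^sub>R norm r) = 0" using c0 by blast
      then have "c \<bullet> r = 0" using \<open>r \<noteq> 0\<close> by simp
      moreover have "c \<bullet> r = r \<bullet> r" by (simp add: r_def inner_diff_left inner_diff_right ru inner_commute uu)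
      ultimately show False using \<open>r \<noteq> 0\<close> by simp
    qed
    then have cdec: "c = (c \<bullet> u) *\<^sub>R u" by (simp add: r_def)
    then have "\<bar>c \<bullet> u\<bar> = 1" using cn un by (metis norm_scaleR mult.right_neutral)
    moreover have "c \<bullet> h = (c \<bullet> u) * n" by (subst cdec) (simp add: uh)
    then have "c \<bullet> u \<ge> 0" using ch npos by (simp add: zero_le_mult_iff)
    ultimately have "c \<bullet> u = 1" by simp
    then show ?thesis using cdec by simp
  qed
  have "lune_face_center g h = u"
    unfolding lune_face_center_def using P U by (rule the_equality)
  then show ?thesis by (simp add: u_def w_def n_def a_def)
qed

lemma thickness:
  fixes g h :: "'a::euclidean_space"
  assumes dim: "DIM('a) \<ge> 3" and g: "norm g = 1" and h: "norm h = 1"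
    and ne1: "h \<noteq> g" and ne2: "h \<noteq> -g"
  shows "lune_thickness g h = arccos (-(g \<bullet> h))"
proof -
  define a where "a = g \<bullet> h"
  have ne3: "g \<noteq> h" "g \<noteq> -h" using ne1 ne2 by auto
  have gg: "g \<bullet> g = 1" using g norm_eq_1 by blast
  have hh: "h \<bullet> h = 1" using h norm_eq_1 by blast
  have ha: "h \<bullet> g = a" by (simp add: a_def inner_commute)
  define w1 where "w1 = h - a *\<^sub>R g"
  define w2 where "w2 = g - a *\<^sub>R h"
  have c1: "lune_face_center g h = w1 /\<^sub>R norm w1"
    using center[OF dim g h ne1 ne2] by (simp add: w1_def a_def)
  have c2: "lune_face_center h g = w2 /\<^sub>R norm w2"
    using center[OF dim h g ne3] by (simp add: w2_def ha)
  have n1: "norm w1 ^ 2 = 1 - a^2"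
    unfolding power2_norm_eq_inner by (simp add: w1_def inner_diff_left inner_diff_right gg hh ha a_def[symmetric] power2_eq_square)
  have n2: "norm w2 ^ 2 = 1 - a^2"
    unfolding power2_norm_eq_inner by (simp add: w2_def inner_diff_left inner_diff_right gg hh ha a_def[symmetric] power2_eq_square)
  have w12: "w1 \<bullet> w2 = - a * (1 - a^2)"
    by (simp add: w1_def w2_def inner_diff_left inner_diff_right gg hh ha a_def[symmetric] power2_eq_square algebra_simps)
  have w1ne: "w1 \<noteq> 0"
  proof
    assume "w1 = 0"
    then have hw: "h = a *\<^sub>R g" by (simp add: w1_def)
    then have "a^2 = 1" using n1 \<open>w1 = 0\<close> by simp
    then have "a = 1 \<or> a = -1" by (simp add: power2_eq_1_iff)
    then show False using hw ne1 ne2 by auto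
  qed
  have pos: "1 - a^2 > 0" using n1 w1ne by (metis zero_less_norm_iff zero_less_power)
  have nn: "norm w1 * norm w2 = 1 - a^2"
  proof -
    have "norm w1 = norm w2" using n1 n2 by (metis norm_ge_zero power2_eq_iff_nonneg)
    then show ?thesis using n1 by (simp add: power2_eq_square)
  qed
  have "lune_face_center g h \<bullet> lune_face_center h g = w1 \<bullet> w2 / (norm w1 * norm w2)"
    by (simp add: c1 c2 divide_inverse mult.commute mult.left_commute)
  also have "\<dots> = - a" using w12 nn pos by simp
  finally show ?thesis by (simp add: lune_thickness_def sdist_def a_def)
qed

theorem mainTheorem1:
  fixes k kp p q :: "'a::euclidean_space"
  assumes dim: "DIM('a) \<ge> 3"
    and k: "norm k = 1"
    and p: "p \<in> hemi_bd k"
    and q: "q \<in> hemi_int k"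
    and arc_sub: "sarc p q \<subseteq> hemi k"
    and orthK: "arc_orth_at p q k"
    and short: "sdist p q < pi / 2"
    and kp: "norm kp = 1"
    and kp_q: "q \<in> hemi_bd kp"
    and kp_p: "p \<in> hemi kp"
    and orthKp: "arc_orth_at q p kp"
  shows "kp \<noteq> k \<and> kp \<noteq> - k \<and>
    (\<forall>m. norm m = 1 \<and> q \<in> hemi_bd m \<and> p \<in> hemi m \<and> m \<noteq> k \<and> m \<noteq> - k
       \<longrightarrow> lune_thickness k kp \<le> lune_thickness k m)"
proof -
  have pn: "norm p = 1" and pk: "p \<bullet> k = 0" using p by (auto simp: hemi_bd_def usphere_def)
  have qn: "norm q = 1" and qk: "q \<bullet> k > 0" using q by (auto simp: hemi_int_def usphere_def)
  have pp: "p \<bullet> p = 1" using pn norm_eq_1 by blast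
  have qq: "q \<bullet> q = 1" using qn norm_eq_1 by blast
  have kk: "k \<bullet> k = 1" using k norm_eq_1 by blast
  have kpkp: "kp \<bullet> kp = 1" using kp norm_eq_1 by blast
  define c where "c = p \<bullet> q"
  define s where "s = q \<bullet> k"
  have spos: "s > 0" using qk by (simp add: s_def)
  have cb: "-1 \<le> c \<and> c \<le> 1" using inner_le1[OF pn qn] by (simp add: c_def)
  have cnn: "c \<ge> 0"
  proof (rule ccontr)
    assume "\<not> c \<ge> 0"
    then have "arccos c \<ge> arccos 0" using cb by (intro arccos_le_arccos) auto
    then show False using short by (simp add: sdist_def c_def)
  qed
  define v where "v = q - c *\<^sub>R p - s *\<^sub>R k"
  have vp: "v \<bullet> p = 0"
    by (simp add: v_def inner_diff_left pp c_def s_def inner_commute[of k p] pk inner_commute[of q p])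
  have vk: "v \<bullet> k = 0"
    by (simp add: v_def inner_diff_left kk s_def pk)
  have "(q - (p \<bullet> q) *\<^sub>R p) \<bullet> v = 0" using orthK vp vk by (auto simp: arc_orth_at_def)
  moreover have "q - (p \<bullet> q) *\<^sub>R p = v + s *\<^sub>R k" by (simp add: v_def c_def)
  ultimately have "(v + s *\<^sub>R k) \<bullet> v = 0" by simp
  then have "v \<bullet> v = 0" by (simp add: inner_add_left inner_commute[of k v] vk)
  then have "v = 0" by simp
  then have qdec: "q = c *\<^sub>R p + s *\<^sub>R k" unfolding v_def by (simp add: algebra_simps)
  have cs: "c^2 + s^2 = 1"
    using qq unfolding qdec by (simp add: inner_add_left inner_add_right pp kk pk inner_commute[of k p] power2_eq_square)
  define e where "e = p - c *\<^sub>R q"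
  define \<beta> where "\<beta> = e \<bullet> kp"
  define v' where "v' = e - \<beta> *\<^sub>R kp"
  have qkp: "q \<bullet> kp = 0" using kp_q by (simp add: hemi_bd_def)
  have v'q: "v' \<bullet> q = 0"
    by (simp add: v'_def e_def inner_diff_left qq c_def inner_commute[of kp q] qkp)
  have v'kp: "v' \<bullet> kp = 0" by (simp add: v'_def \<beta>_def inner_diff_left kpkp)
  have "(p - (q \<bullet> p) *\<^sub>R q) \<bullet> v' = 0" using orthKp v'q v'kp by (auto simp: arc_orth_at_def)
  moreover have "p - (q \<bullet> p) *\<^sub>R q = v' + \<beta> *\<^sub>R kp" by (simp add: v'_def e_def c_def inner_commute)
  ultimately have "(v' + \<beta> *\<^sub>R kp) \<bullet> v' = 0" by simp
  then have "v' \<bullet> v' = 0" by (simp add: inner_add_left inner_commute[of kp v'] v'kp)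
  then have "v' = 0" by simp
  then have edec: "e = \<beta> *\<^sub>R kp" unfolding v'_def by (simp add: algebra_simps)
  have e2: "e = s *\<^sub>R (s *\<^sub>R p - c *\<^sub>R k)"
  proof -
    have "e = (1 - c^2) *\<^sub>R p - (c * s) *\<^sub>R k" by (simp add: e_def qdec algebra_simps power2_eq_square)
    also have "1 - c^2 = s^2" using cs by simp
    finally show ?thesis by (simp add: algebra_simps power2_eq_square)
  qed
  have pkp: "p \<bullet> kp \<ge> 0" using kp_p by (simp add: hemi_def)
  have pe: "p \<bullet> e = s^2" using e2 by (simp add: inner_diff_right pp pk inner_commute[of p k] power2_eq_square)
  have pe2: "p \<bullet> e = \<beta> * (p \<bullet> kp)" using edec by simp
  have bpos: "\<beta> > 0"
  proof (rule ccontr)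
    assume "\<not> \<beta> > 0"
    then have "\<beta> * (p \<bullet> kp) \<le> 0" using pkp by (simp add: mult_nonpos_nonneg)
    then show False using pe pe2 spos by (simp add: power2_eq_square) (smt (verit) mult_pos_pos)
  qed
  have ee1: "e \<bullet> e = \<beta>^2" using edec kpkp by (simp add: power2_eq_square)
  have ee2: "e \<bullet> e = s^2 * (s^2 + c^2)" unfolding e2
    by (simp add: inner_diff_left inner_diff_right pp kk pk inner_commute[of k p] power2_eq_square algebra_simps)
  have "\<beta>^2 = s^2" using ee1 ee2 cs by (simp add: add.commute)
  then have bs: "\<beta> = s" using bpos spos by (metis less_eq_real_def power2_eq_iff_nonneg)
  have kpdec: "kp = s *\<^sub>R p - c *\<^sub>R k"
  proof -
    have "s *\<^sub>R kp = s *\<^sub>R (s *\<^sub>R p - c *\<^sub>R k)" using edec e2 bs by (auto simp del: scaleR_right_diff_distrib)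
    then show ?thesis using spos by simp
  qed
  have kkp: "k \<bullet> kp = - c" by (simp add: kpdec inner_diff_right kk pk inner_commute[of k p])
  have pkp': "p \<bullet> kp = s" by (simp add: kpdec inner_diff_right pp pk)
  have ne1: "kp \<noteq> k" using pkp' pk spos by auto
  have ne2: "kp \<noteq> - k" using pkp' pk spos by auto
  have th1: "lune_thickness k kp = arccos c" using thickness[OF dim k kp ne1 ne2] kkp by simp
  have "lune_thickness k kp \<le> lune_thickness k m"
    if m: "norm m = 1" "q \<in> hemi_bd m" "p \<in> hemi m" "m \<noteq> k" "m \<noteq> - k" for m
  proof -
    define \<alpha> where "\<alpha> = m \<bullet> p"
    define \<gamma> where "\<gamma> = m \<bullet> k"
    have mm: "m \<bullet> m = 1" using m(1) norm_eq_1 by blast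
    have a0: "\<alpha> \<ge> 0" using m(3) by (simp add: hemi_def \<alpha>_def inner_commute)
    have mq: "c * \<alpha> + s * \<gamma> = 0"
      using m(2) by (simp add: hemi_bd_def qdec inner_add_left \<alpha>_def \<gamma>_def inner_commute[of p m] inner_commute[of k m])
    define r where "r = m - \<alpha> *\<^sub>R p - \<gamma> *\<^sub>R k"
    have "r \<bullet> r = 1 - \<alpha>^2 - \<gamma>^2"
      by (simp add: r_def inner_diff_left inner_diff_right mm pp kk pk inner_commute[of k p]
          \<alpha>_def \<gamma>_def inner_commute[of p m] inner_commute[of k m] power2_eq_square)
    then have bes: "\<alpha>^2 + \<gamma>^2 \<le> 1" by (smt (verit) inner_ge_zero)
    have "s^2 * \<gamma>^2 = c^2 * \<alpha>^2"
    proof -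
      have "s * \<gamma> = - (c * \<alpha>)" using mq by simp
      then have "(s * \<gamma>)^2 = (c * \<alpha>)^2" by simp
      then show ?thesis by (simp add: power_mult_distrib)
    qed
    also have "\<dots> \<le> c^2 * (1 - \<gamma>^2)" using bes by (intro mult_left_mono) auto
    finally have "\<gamma>^2 * (s^2 + c^2) \<le> c^2" by (simp add: algebra_simps)
    then have "\<gamma>^2 \<le> c^2" using cs by (simp add: add.commute)
    then have "\<bar>\<gamma>\<bar> \<le> c" using cnn by (metis abs_le_square_iff abs_of_nonneg)
    then have g1: "- \<gamma> \<le> c" by simp
    have gb: "-1 \<le> - \<gamma>" using inner_le1[OF m(1) k] by (simp add: \<gamma>_def)
    have "lune_thickness k m = arccos (- \<gamma>)"
      using thickness[OF dim k m(1) m(4) m(5)] by (simp add: \<gamma>_def inner_commute)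
    then show ?thesis using th1 arccos_le_arccos[OF gb g1] cb by simp
  qed
  then show ?thesis using ne1 ne2 by blast
qed

end
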